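(* Let $p,q\ge 2$ be relatively prime integers, and let $\omega_j=e^{2\pi i j/p}$ and $\xi_j=e^{2\pi i j/q}$. Then $$p\sum_{j=1}^{q-1}\frac{\xi_j}{(\xi_j-1)^3(\xi_j^p-1)}+q\sum_{j=1}^{p-1}\frac{\omega_j}{(\omega_j-1)^3(\omega_j^q-1)}=\frac{1}{720}\left(p^4+q^4-5p^2q^2-15p^2q-15pq^2+15p+15q+3\right).$$ *)

theory Defs
  imports "HOL-Analysis.Analysis"
begin

end

theory Submission imports Defs "HOL-Complex_Analysis.Complex_Analysis" "HOL-Computational_Algebra.Polynomial"
begin
definition Pc :: "nat \<Rightarrow> complex poly" where
  "Pc n = (\<Sum>k<n. monom (of_nat (n choose Suc k)) k)"

lemma coeff_Pc: "coeff (Pc n) i = of_nat (n choose Suc i)"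
  unfolding Pc_def by (simp add: coeff_sum coeff_monom)

lemma poly_Pc: "u * poly (Pc n) u = (1+u)^n - 1"
proof (cases n)
  case 0 then show ?thesis by (simp add: Pc_def)
next
  case (Suc m)
  have "(1+u)^n = (\<Sum>k\<le>n. of_nat (n choose k) * u ^ k)"
    using binomial_ring[of u 1 n] by (simp add: add.commute)
  also have "\<dots> = 1 + (\<Sum>k\<le>m. of_nat (n choose Suc k) * u ^ Suc k)"
    unfolding Suc by (subst sum.atMost_Suc_shift) simp
  also have "(\<Sum>k\<le>m. of_nat (n choose Suc k) * u ^ Suc k) = u * poly (Pc n) u"
    unfolding Pc_def poly_sum poly_monom Suc lessThan_Suc_atMost[symmetric]
    by (simp add: sum_distrib_left mult_ac distrib_left del: binomial_Suc_Suc)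
  finally show ?thesis by simp
qed

lemma ch: fixes x :: complex assumes "x = of_nat n" shows
  "of_nat (n choose 1) = x"
  "of_nat (n choose 2) = x*(x-1)/2"
  "of_nat (n choose 3) = x*(x-1)*(x-2)/6"
  "of_nat (n choose 4) = x*(x-1)*(x-2)*(x-3)/24"
  "of_nat (n choose 5) = x*(x-1)*(x-2)*(x-3)*(x-4)/120"
  unfolding assms binomial_gbinomial by (simp_all add: gbinomial_Suc numeral_eq_Suc atMost_Suc field_simps)

lemma ch': fixes x :: complex assumes "x = of_nat n" shows
  "of_nat (n choose Suc 0) = x"
  "of_nat (n choose Suc (Suc 0)) = x*(x-1)/2"
  "of_nat (n choose Suc (Suc (Suc 0))) = x*(x-1)*(x-2)/6"
  "of_nat (n choose Suc (Suc (Suc (Suc 0)))) = x*(x-1)*(x-2)*(x-3)/24"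
  "of_nat (n choose Suc (Suc (Suc (Suc (Suc 0))))) = x*(x-1)*(x-2)*(x-3)*(x-4)/120"
  unfolding assms binomial_gbinomial by (simp_all add: gbinomial_Suc atMost_Suc field_simps)

lemma fps_poly: "poly P has_fps_expansion fps_of_poly P"
  unfolding has_fps_expansion_def by simp

lemma res1:
  fixes p q :: nat assumes p: "p\<ge>1" and q: "q\<ge>1"
  defines "x \<equiv> (of_nat p :: complex)" and "y \<equiv> (of_nat q :: complex)"
  shows "residue (\<lambda>z. 1/((z-1)^3*(z^p-1)*(z^q-1))) 1 =
    - (x^4 + y^4 - 5*x^2*y^2 - 15*x^2*y - 15*x*y^2 + 15*x + 15*y + 3) / (720*x*y)"
proof -
  define A where "A = fps_of_poly (Pc p * Pc q)"
  define G where "G = inverse A"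
  have xy: "x \<noteq> 0" "y \<noteq> 0" using p q by (auto simp: x_def y_def)
  have A0: "A $ 0 = x*y" by (simp add: A_def coeff_mult coeff_Pc x_def y_def)
  have eq: "(G*A) $ n = (if n = 0 then 1 else 0)" for n
    using inverse_mult_eq_1[of A] A0 xy by (simp add: G_def)
  have An: "A $ n = (\<Sum>i\<le>n. of_nat (p choose Suc i) * of_nat (q choose Suc (n-i)))" for n
    by (simp add: A_def coeff_mult coeff_Pc)
  have shift: "(\<lambda>t. 1/((1+t-1)^3*((1+t)^p-1)*((1+t)^q-1))) = (\<lambda>t. inverse (poly (Pc p * Pc q) t) / t ^ Suc 4)"
  proof
    fix t :: complex
    have "(1+t)^p - 1 = t * poly (Pc p) t" "(1+t)^q - 1 = t * poly (Pc q) t" using poly_Pc by metis+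
    then show "1/((1+t-1)^3*((1+t)^p-1)*((1+t)^q-1)) = inverse (poly (Pc p * Pc q) t) / t ^ Suc 4"
      by (simp add: divide_inverse inverse_mult_distrib numeral_eq_Suc power_Suc mult_ac)
  qed
  have "residue (\<lambda>z. 1/((z-1)^3*(z^p-1)*(z^q-1))) 1 = residue (\<lambda>t. inverse (poly (Pc p * Pc q) t) / t ^ Suc 4) 0"
    by (subst residue_shift_0) (simp only: shift)
  also have "\<dots> = G $ 4"
    unfolding G_def A_def
    by (rule residue_fps_expansion_over_power_at_0, rule has_fps_expansion_inverse[OF fps_poly])
       (use A0 xy in \<open>simp add: A_def\<close>)
  also have "\<dots> = - (x^4 + y^4 - 5*x^2*y^2 - 15*x^2*y - 15*x*y^2 + 15*x + 15*y + 3) / (720*x*y)"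
  proof -
    note c = ch[OF meta_eq_to_obj_eq[OF x_def]] ch[OF meta_eq_to_obj_eq[OF y_def]]
    note c' = ch'[OF meta_eq_to_obj_eq[OF x_def]] ch'[OF meta_eq_to_obj_eq[OF y_def]]
      have e: "(\<Sum>i=0..n. G$i * A$(n-i)) = (if n = 0 then 1 else 0)" for n
      using eq[of n] by (simp add: fps_mult_nth)
    have e0: "G$0 * A$0 = 1" using e[of 0] by simp
    have e1: "G$0 * A$1 + G$1 * A$0 = 0" using e[of 1] by (simp add: numeral_eq_Suc)
    have e2: "G$0 * A$2 + G$1 * A$1 + G$2 * A$0 = 0" using e[of 2] by (simp add: numeral_eq_Suc)
    have e3: "G$0 * A$3 + G$1 * A$2 + G$2 * A$1 + G$3 * A$0 = 0" using e[of 3] by (simp add: numeral_eq_Suc)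
    have e4: "G$0 * A$4 + G$1 * A$3 + G$2 * A$2 + G$3 * A$1 + G$4 * A$0 = 0" using e[of 4] by (simp add: numeral_eq_Suc)
    have a1: "A$1 = (x)*(y*(y-1)/2) + (x*(x-1)/2)*(y)" by (simp add: An atMost_Suc c' numeral_eq_Suc x_def[symmetric] y_def[symmetric])
    have a2: "A$2 = (x)*(y*(y-1)*(y-2)/6) + (x*(x-1)/2)*(y*(y-1)/2) + (x*(x-1)*(x-2)/6)*(y)" by (simp add: An atMost_Suc c' numeral_eq_Suc x_def[symmetric] y_def[symmetric])
    have a3: "A$3 = (x)*(y*(y-1)*(y-2)*(y-3)/24) + (x*(x-1)/2)*(y*(y-1)*(y-2)/6) + (x*(x-1)*(x-2)/6)*(y*(y-1)/2) + (x*(x-1)*(x-2)*(x-3)/24)*(y)" by (simp add: An atMost_Suc c' numeral_eq_Suc x_def[symmetric] y_def[symmetric])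
    have a4: "A$4 = (x)*(y*(y-1)*(y-2)*(y-3)*(y-4)/120) + (x*(x-1)/2)*(y*(y-1)*(y-2)*(y-3)/24) + (x*(x-1)*(x-2)/6)*(y*(y-1)*(y-2)/6) + (x*(x-1)*(x-2)*(x-3)/24)*(y*(y-1)/2) + (x*(x-1)*(x-2)*(x-3)*(x-4)/120)*(y)" by (simp add: An atMost_Suc c' numeral_eq_Suc x_def[symmetric] y_def[symmetric])
    have g0: "G$0 = 1/(x*y)" using e0 A0 xy by (simp add: field_simps)
    have "G$1 = - (G$0 * A$1)/(x*y)" using e1 A0 xy by (simp add: field_simps) (simp add: eq_neg_iff_add_eq_0 algebra_simps)
    also have "\<dots> = (1 - y/2 - x/2)/(x*y)" using xy unfolding g0 a1 by (simp add: field_simps; algebra)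
    finally have g1: "G$1 = (1 - y/2 - x/2)/(x*y)" .
    have "G$2 = - (G$0 * A$2 + G$1 * A$1)/(x*y)" using e2 A0 xy by (simp add: field_simps) (simp add: eq_neg_iff_add_eq_0 algebra_simps)
    also have "\<dots> = (1/12 - y/4 + y^2/12 - x/4 + x*y/4 + x^2/12)/(x*y)" using xy unfolding g0 g1 a1 a2 by (simp add: field_simps; algebra)
    finally have g2: "G$2 = (1/12 - y/4 + y^2/12 - x/4 + x*y/4 + x^2/12)/(x*y)" .
    have "G$3 = - (G$0 * A$3 + G$1 * A$2 + G$2 * A$1)/(x*y)" using e3 A0 xy by (simp add: field_simps) (simp add: eq_neg_iff_add_eq_0 algebra_simps)
    also have "\<dots> = (y/24 + x/24 - x*y^2/24 - x^2*y/24)/(x*y)" using xy unfolding g0 g1 g2 a1 a2 a3 by (simp add: field_simps; algebra)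
    finally have g3: "G$3 = (y/24 + x/24 - x*y^2/24 - x^2*y/24)/(x*y)" .
    have "G$4 = - (G$0 * A$4 + G$1 * A$3 + G$2 * A$2 + G$3 * A$1)/(x*y)" using e4 A0 xy by (simp add: field_simps) (simp add: eq_neg_iff_add_eq_0 algebra_simps)
    also have "\<dots> = (-1/240 - y/48 - y^4/720 - x/48 + x*y^2/48 + x^2*y/48 + x^2*y^2/144 - x^4/720)/(x*y)" using xy unfolding g0 g1 g2 g3 a1 a2 a3 a4 by (simp add: field_simps; algebra)
    finally have g4: "G$4 = (-1/240 - y/48 - y^4/720 - x/48 + x*y^2/48 + x^2*y/48 + x^2*y^2/144 - x^4/720)/(x*y)" .
    show ?thesis using xy unfolding g4 by (simp add: field_simps; algebra)
  qed
  finally show ?thesis .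
qed

lemma res_simple:
  fixes p q :: nat and w :: complex
  assumes p: "p \<ge> 1" and q: "q \<ge> 1" and w: "w^q = 1" "w \<noteq> 1" "w^p \<noteq> 1"
  shows "residue (\<lambda>z. 1/((z-1)^3*(z^p-1)*(z^q-1))) w = w / (of_nat q * (w-1)^3 * (w^p-1))"
proof -
  define T where "T = {z::complex. z^p = 1} \<union> {1}"
  have finT: "finite T" using p by (simp add: T_def finite_roots_unity)
  define S where "S = UNIV - T"
  have S: "open S" "connected S" "w \<in> S"
    using finT w unfolding S_def
    by (auto intro!: connected_open_diff_countable countable_finite finite_imp_closed
        simp: T_def open_Diff)
  have fh: "(\<lambda>z. 1/((z-1)^3*(z^p-1))) holomorphic_on S"
    by (rule holomorphic_intros)+ (auto simp: S_def T_def)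
  have gh: "(\<lambda>z. z^q-1) holomorphic_on S" by (rule holomorphic_intros)+
  have d: "((\<lambda>z. z^q-1) has_field_derivative of_nat q * w^(q-1)) (at w)"
    by (auto intro!: derivative_eq_intros)
  have wq: "w * w^(q-1) = 1" using q w by (metis One_nat_def Suc_diff_le diff_Suc_1 power_Suc)
  have r: "residue (\<lambda>z. 1/((z-1)^3*(z^p-1)) / (z^q-1)) w = 1/((w-1)^3*(w^p-1)) / (of_nat q * w^(q-1))"
    using q w wq
    by (intro residue_simple_pole_deriv[OF fh gh S(1,2,3) d]) auto
  have ef: "(\<lambda>z::complex. 1/((z-1)^3*(z^p-1)*(z^q-1))) = (\<lambda>z. 1/((z-1)^3*(z^p-1)) / (z^q-1))"
    by (simp only: divide_divide_eq_left)
  have e3: "1/((w-1)^3*(w^p-1)) / (of_nat q * w^(q-1)) = w / (of_nat q * (w-1)^3 * (w^p-1))"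
  proof -
    have "w \<noteq> 0" using wq by auto
    hence "w^(q-1) = 1/w" using wq by (simp add: field_simps)
    thus ?thesis by (simp add: field_simps)
  qed
  show ?thesis unfolding ef by (rule trans[OF r e3])
qed

lemma key_alg:
  fixes a b c x y E :: complex
  assumes "x \<noteq> 0" "y \<noteq> 0" "c = - E / (720*x*y)" "c + a/y + b/x = 0"
  shows "x*a + y*b = E/720"
proof -
  have "x*y*(c + a/y + b/x) = x*y*c + x*a + y*b" using assms(1,2) by (simp add: algebra_simps)
  hence h0: "x*y*c + x*a + y*b = 0" using assms(4) by simp
  have h1: "x*y*c = - E/720" using assms(1-3) by simp
  from h0 have "x*a + y*b = - (x*y*c)" by (simp add: eq_neg_iff_add_eq_0 add_ac)
  also from h1 have "\<dots> = E/720" by simp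
  finally show ?thesis .
qed

theorem mainTheorem9:
  fixes p q :: nat
  assumes "p \<ge> 2" and "q \<ge> 2" and "coprime p q"
  defines "\<omega> \<equiv> (\<lambda>j::nat. exp (2 * of_real pi * \<i> * of_nat j / of_nat p) :: complex)"
      and "\<xi> \<equiv> (\<lambda>j::nat. exp (2 * of_real pi * \<i> * of_nat j / of_nat q) :: complex)"
  shows "of_nat p * (\<Sum>j=1..q-1. \<xi> j / ((\<xi> j - 1)^3 * (\<xi> j ^ p - 1)))
       + of_nat q * (\<Sum>j=1..p-1. \<omega> j / ((\<omega> j - 1)^3 * (\<omega> j ^ q - 1)))
       = (of_nat p ^ 4 + of_nat q ^ 4 - 5 * of_nat p ^ 2 * of_nat q ^ 2
          - 15 * of_nat p ^ 2 * of_nat q - 15 * of_nat p * of_nat q ^ 2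
          + 15 * of_nat p + 15 * of_nat q + 3) / 720"
proof -
  have p1: "p \<ge> 1" "q \<ge> 1" using assms by auto
  have cop: "coprime q p" using assms(3) by (simp add: coprime_commute)
  define H where "H = (\<lambda>z::complex. 1/((z-1)^3*(z^p-1)*(z^q-1)))"
  define X where "X = \<xi> ` {1..q-1}"
  define W where "W = \<omega> ` {1..p-1}"
  define pts where "pts = insert 1 (X \<union> W)"
  have xq: "\<xi> j ^ q = 1" for j unfolding \<xi>_def using complex_root_unity p1 by auto
  have wp: "\<omega> j ^ p = 1" for j unfolding \<omega>_def using complex_root_unity p1 by auto
  have xpow: "\<xi> j ^ p = \<xi> (j*p)" for j
    unfolding \<xi>_def exp_of_nat_mult[symmetric] by (simp add: algebra_simps)
  have wpow: "\<omega> j ^ q = \<omega> (j*q)" for j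
    unfolding \<omega>_def exp_of_nat_mult[symmetric] by (simp add: algebra_simps)
  have x1: "\<xi> j = 1 \<longleftrightarrow> q dvd j" for j unfolding \<xi>_def using complex_root_unity_eq_1 p1 by auto
  have w1: "\<omega> j = 1 \<longleftrightarrow> p dvd j" for j unfolding \<omega>_def using complex_root_unity_eq_1 p1 by auto
  have xne: "\<xi> j \<noteq> 1" "\<xi> j ^ p \<noteq> 1" if "j \<in> {1..q-1}" for j
  proof -
    have nd: "\<not> q dvd j" using that by (auto dest: dvd_imp_le)
    then show "\<xi> j \<noteq> 1" using x1 by simp
    show "\<xi> j ^ p \<noteq> 1" using nd cop by (simp add: xpow x1 coprime_dvd_mult_left_iff)
  qed
  have wne: "\<omega> j \<noteq> 1" "\<omega> j ^ q \<noteq> 1" if "j \<in> {1..p-1}" for j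
  proof -
    have nd: "\<not> p dvd j" using that by (auto dest: dvd_imp_le)
    then show "\<omega> j \<noteq> 1" using w1 by simp
    show "\<omega> j ^ q \<noteq> 1" using nd assms(3) by (simp add: wpow w1 coprime_dvd_mult_left_iff)
  qed
  have xnorm: "norm (\<xi> j) = 1" for j unfolding \<xi>_def by (simp add: norm_exp_eq_Re)
  have wnorm: "norm (\<omega> j) = 1" for j unfolding \<omega>_def by (simp add: norm_exp_eq_Re)
  have rootq: "z \<in> insert 1 X" if "z^q = 1" for z
  proof -
    from that complex_roots_unity[OF p1(2)] obtain j where j: "j < q" "z = \<xi> j"
      unfolding \<xi>_def by blast
    show ?thesis
    proof (cases "j = 0")
      case True then show ?thesis using j by (simp add: \<xi>_def)
    next
      case False then show ?thesis using j by (auto simp: X_def)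
    qed
  qed
  have rootp: "z \<in> insert 1 W" if "z^p = 1" for z
  proof -
    from that complex_roots_unity[OF p1(1)] obtain j where j: "j < p" "z = \<omega> j"
      unfolding \<omega>_def by blast
    show ?thesis
    proof (cases "j = 0")
      case True then show ?thesis using j by (simp add: \<omega>_def)
    next
      case False then show ?thesis using j by (auto simp: W_def)
    qed
  qed
  have finpts: "finite pts" by (simp add: pts_def X_def W_def)
  have ptsnorm: "norm s = 1" if "s \<in> pts" for s
    using that xnorm wnorm by (auto simp: pts_def X_def W_def)
  have Hholo: "H holomorphic_on UNIV - pts"
    unfolding H_def
  proof (intro holomorphic_intros)
    fix z assume z: "z \<in> UNIV - pts"
    have "z \<noteq> 1" "z^p \<noteq> 1" "z^q \<noteq> 1" using z rootp rootq by (auto simp: pts_def)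
    then show "(z - 1) ^ 3 * (z ^ p - 1) * (z ^ q - 1) \<noteq> 0" by auto
  qed
  define C where "C = (\<Sum>s\<in>pts. residue H s)"
  have pimg: "path_image (circlepath 0 R) \<subseteq> UNIV - pts" if "R > 1" for R
    using that ptsnorm by (auto simp: path_image_circlepath)
  have resthm: "contour_integral (circlepath 0 R) H = 2*pi*\<i>*C" if "R > 1" for R
  proof -
    have "contour_integral (circlepath 0 R) H =
        2 * pi * \<i> * (\<Sum>s\<in>pts. winding_number (circlepath 0 R) s * residue H s)"
      using that by (intro Residue_theorem[OF _ _ finpts Hholo] pimg) auto
    also have "(\<Sum>s\<in>pts. winding_number (circlepath 0 R) s * residue H s) = C"
      unfolding C_def
      by (intro sum.cong refl) (use that ptsnorm in \<open>simp add: winding_number_circlepath\<close>)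
    finally show ?thesis .
  qed
  have cint: "(H has_contour_integral 2*pi*\<i>*C) (circlepath 0 R)" if "R > 1" for R
  proof -
    have "H contour_integrable_on circlepath 0 R"
      by (rule contour_integrable_continuous_circlepath)
         (rule holomorphic_on_imp_continuous_on[OF holomorphic_on_subset[OF Hholo pimg[OF that]]])
    from has_contour_integral_integral[OF this] show ?thesis using resthm[OF that] by simp
  qed
  have bnd: "norm (H x) \<le> 32/R^5" if R: "R \<ge> 2" and x: "norm x = R" for R x
  proof -
    have ge: "norm (x^n - 1) \<ge> R/2" if "n \<ge> 1" for n
    proof -
      have "R \<le> R^n" using R that power_increasing[of 1 n R] by simp
      moreover have "norm (x^n) - norm (1::complex) \<le> norm (x^n - 1)" by (rule norm_triangle_ineq2)
      ultimately show ?thesis using R x by (simp add: norm_power)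
    qed
    have a: "norm (x - 1) \<ge> R/2" using ge[of 1] by simp
    have b: "norm (x^p - 1) \<ge> R/2" "norm (x^q - 1) \<ge> R/2" using ge p1 by auto
    have "(R/2)^3 * (R/2) * (R/2) \<le> norm (x-1)^3 * norm (x^p - 1) * norm (x^q-1)"
      using a b R by (intro mult_mono power_mono) auto
    moreover have "(R/2)^3 * (R/2) * (R/2) = R^5/32" by (simp add: field_simps eval_nat_numeral)
    moreover have "norm ((x-1)^3 * (x^p - 1) * (x^q-1)) = norm (x-1)^3 * norm (x^p - 1) * norm (x^q-1)"
      by (simp only: norm_mult norm_power)
    ultimately have le: "R^5/32 \<le> norm ((x-1)^3 * (x^p - 1) * (x^q-1))" by linarith
    have pos: "R^5/32 > 0" using R by simp
    have "norm (H x) = 1 / norm ((x-1)^3 * (x^p - 1) * (x^q-1))"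
      by (simp add: H_def norm_divide)
    also have "\<dots> \<le> 1 / (R^5/32)"
    proof -
      have np: "norm ((x-1)^3 * (x^p - 1) * (x^q-1)) > 0" using le pos by linarith
      show ?thesis using le pos np by (intro divide_left_mono) auto
    qed
    also have "\<dots> = 32/R^5" by simp
    finally show ?thesis .
  qed
  have Cbnd: "norm C \<le> 4/R" if R: "R \<ge> 2" for R
  proof -
    have "norm (2*pi*\<i>*C) \<le> 32/R^5 * (2*pi*R)"
      using R by (intro has_contour_integral_bound_circlepath[OF cint] bnd) auto
    hence "2*pi*norm C \<le> 32/R^5 * (2*pi*R)" by (simp add: norm_mult)
    hence "norm C \<le> 32/R^4" using R by (simp add: field_simps eval_nat_numeral)
    also have "32/R^4 \<le> 4/R"
    proof -
      have "8 \<le> R^3" using R power_mono[of 2 R 3] by simp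
      hence "8*R \<le> R^4" using R by (simp add: eval_nat_numeral)
      thus ?thesis using R by (simp add: field_simps)
    qed
    finally show ?thesis .
  qed
  have C0: "C = 0"
  proof (rule ccontr)
    assume "C \<noteq> 0"
    hence n: "norm C > 0" by simp
    define R where "R = max 2 (8 / norm C)"
    have R2: "R \<ge> 2" "R \<ge> 8/norm C" by (auto simp: R_def)
    have "norm C \<le> 4/R" using Cbnd R2 by simp
    moreover have "norm C * R \<ge> norm C * (8/norm C)" using R2 n by (intro mult_left_mono) auto
    hence "norm C * R \<ge> 8" using n by simp
    hence "4/R \<le> norm C / 2" using R2 by (simp add: field_simps)
    ultimately show False using n by simp
  qed
  have dis: "1 \<notin> X \<union> W" using xne wne by (auto simp: X_def W_def)
  have XW: "X \<inter> W = {}"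
  proof (rule ccontr)
    assume "X \<inter> W \<noteq> {}"
    then obtain j k where jk: "j \<in> {1..q-1}" "k \<in> {1..p-1}" "\<xi> j = \<omega> k"
      unfolding X_def W_def by blast
    have "\<omega> k ^ q = 1" using xq[of j] jk(3) by simp
    with wne(2)[OF jk(2)] show False by simp
  qed
  have Csplit: "C = residue H 1 + (\<Sum>s\<in>X. residue H s) + (\<Sum>s\<in>W. residue H s)"
    unfolding C_def pts_def using dis XW
    by (simp add: sum.union_disjoint X_def W_def add.assoc)
  have injX: "inj_on \<xi> {1..q-1}"
  proof (rule inj_onI)
    fix j k assume jk: "j \<in> {1..q-1}" "k \<in> {1..q-1}" "\<xi> j = \<xi> k"
    hence "j mod q = k mod q" unfolding \<xi>_def using complex_root_unity_eq p1 by blast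
    thus "j = k" using jk by auto
  qed
  have injW: "inj_on \<omega> {1..p-1}"
  proof (rule inj_onI)
    fix j k assume jk: "j \<in> {1..p-1}" "k \<in> {1..p-1}" "\<omega> j = \<omega> k"
    hence "j mod p = k mod p" unfolding \<omega>_def using complex_root_unity_eq p1 by blast
    thus "j = k" using jk by auto
  qed
  have sX: "(\<Sum>s\<in>X. residue H s) = (\<Sum>j=1..q-1. \<xi> j / ((\<xi> j - 1)^3 * (\<xi> j ^ p - 1))) / of_nat q"
    unfolding X_def sum.reindex[OF injX] sum_divide_distrib
  proof (intro sum.cong refl)
    fix j assume j: "j \<in> {1..q-1}"
    have "residue H (\<xi> j) = \<xi> j / (of_nat q * (\<xi> j - 1)^3 * (\<xi> j ^ p - 1))"
      unfolding H_def by (rule res_simple[OF p1 xq xne[OF j]])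
    thus "(residue H \<circ> \<xi>) j = \<xi> j / ((\<xi> j - 1)^3 * (\<xi> j ^ p - 1)) / of_nat q"
      by (simp add: mult_ac)
  qed
  have Hsym: "H = (\<lambda>z::complex. 1/((z-1)^3*(z^q-1)*(z^p-1)))"
    by (simp add: H_def fun_eq_iff mult_ac)
  have sW: "(\<Sum>s\<in>W. residue H s) = (\<Sum>j=1..p-1. \<omega> j / ((\<omega> j - 1)^3 * (\<omega> j ^ q - 1))) / of_nat p"
    unfolding W_def sum.reindex[OF injW] sum_divide_distrib
  proof (intro sum.cong refl)
    fix j assume j: "j \<in> {1..p-1}"
    have "residue H (\<omega> j) = \<omega> j / (of_nat p * (\<omega> j - 1)^3 * (\<omega> j ^ q - 1))"
      unfolding Hsym by (rule res_simple[OF p1(2,1) wp wne[OF j]])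
    thus "(residue H \<circ> \<omega>) j = \<omega> j / ((\<omega> j - 1)^3 * (\<omega> j ^ q - 1)) / of_nat p"
      by (simp add: mult_ac)
  qed
  have r1: "residue H 1 = - (of_nat p ^ 4 + of_nat q ^ 4 - 5 * of_nat p ^ 2 * of_nat q ^ 2
          - 15 * of_nat p ^ 2 * of_nat q - 15 * of_nat p * of_nat q ^ 2
          + 15 * of_nat p + 15 * of_nat q + 3) / (720 * of_nat p * of_nat q)"
    unfolding H_def by (rule res1[OF p1])
  have pq0: "(of_nat p :: complex) \<noteq> 0" "(of_nat q :: complex) \<noteq> 0" using p1 by auto
  have "residue H 1 + (\<Sum>j=1..q-1. \<xi> j / ((\<xi> j - 1)^3 * (\<xi> j ^ p - 1))) / of_nat q
     + (\<Sum>j=1..p-1. \<omega> j / ((\<omega> j - 1)^3 * (\<omega> j ^ q - 1))) / of_nat p = 0"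
    using C0 Csplit sX sW by simp
  from key_alg[OF pq0 r1 this] show ?thesis .
qed

end
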